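(* Let $A\subseteq\mathbb{N}$ be infinite and coinfinite and let $Q=\{X\subseteq\mathbb{N}: X\triangle A \text{ is finite}\}$, a quantifier of type $\langle 1\rangle$. Then the set $\{X\subseteq\mathbb{N}: X\setminus A\text{... }\}$, precisely the set $\{X\subseteq\mathbb{N}: A\setminus X\text{ is finite}\}$, viewed as a subset of the logic space $X_\tau=2^{\mathbb{N}}$ for the signature $\tau$ consisting of one unary relation, is $\mathrm{Aut}(Q)$-invariant but not definable in $\mathscr{L}_{\omega_1\omega}(Q)$.
   Context: A quantifier of type $\langle k\rangle$ on $\mathbb{N}$ is a family $Q$ of subsets of $\mathbb{N}^k$. The logic $\mathscr{L}_{\omega_1\omega}(Q)$ extends $\mathscr{L}_{\omega_1\omega}$ (countable conjunctions/disjunctions, finite quantifier strings) by formulas $Qx\,\varphi(x,y)$, interpreted in a structure $M$ with universe $\mathbb{N}$ by $M\models Qx\,\varphi(x,b)$ iff $\{a:M\models\varphi(a,b)\}\in Q$. A permutation $f$ of $\mathbb{N}$ fixes $Q$ if $B\in Q\iff f(B)\in Q$ for all $B$, where $f(B)=\{f(b):b\in B\}$; $\mathrm{Aut}(Q)$ is the group of such permutations. A set $S\subseteq 2^\mathbb{N}$ (identified with structures $\langle\mathbb{N},X\rangle$ with one unary predicate $X$) is $\mathrm{Aut}(Q)$-invariant if $g(S)=S$ for all $g\in\mathrm{Aut}(Q)$, and definable in $\mathscr{L}_{\omega_1\omega}(Q)$ if there is a sentence $\varphi$ in the signature with one unary predicate such that $X\in S\iff\langle\mathbb{N},X\rangle\models\varphi$.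 *)

theory Defs
  imports Main
begin

text \<open>Formulas of L_{omega_1 omega}(Q) in the signature with one unary predicate X
  (with equality). Countable conjunctions are indexed
  by nat (finite/countable ones by repetition); disjunction, implication, universal
  quantification are definable via negation.\<close>

datatype form =
    FEq nat nat
  | FPred nat
  | FNeg form
  | FConj "nat \<Rightarrow> form"
  | FEx nat form
  | FQ nat form

primrec fv :: "form \<Rightarrow> nat set" where
  "fv (FEq u v) = {u, v}"
| "fv (FPred v) = {v}"
| "fv (FNeg p) = fv p"
| "fv (FConj f) = (\<Union>i. fv (f i))"
| "fv (FEx v p) = fv p - {v}"
| "fv (FQ v p) = fv p - {v}"

primrec sat :: "nat set set \<Rightarrow> nat set \<Rightarrow> (nat \<Rightarrow> nat) \<Rightarrow> form \<Rightarrow> bool" where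
  "sat Q X s (FEq u v) = (s u = s v)"
| "sat Q X s (FPred v) = (s v \<in> X)"
| "sat Q X s (FNeg p) = (\<not> sat Q X s p)"
| "sat Q X s (FConj f) = (\<forall>i. sat Q X s (f i))"
| "sat Q X s (FEx v p) = (\<exists>a. sat Q X (s(v := a)) p)"
| "sat Q X s (FQ v p) = ({a. sat Q X (s(v := a)) p} \<in> Q)"

definition sentence :: "form \<Rightarrow> bool" where
  "sentence p \<longleftrightarrow> fv p = {}"

definition definable :: "nat set set \<Rightarrow> nat set set \<Rightarrow> bool" where
  "definable Q S \<longleftrightarrow> (\<exists>p. sentence p \<and> (\<forall>X s. X \<in> S \<longleftrightarrow> sat Q X s p))"

definition Aut :: "nat set set \<Rightarrow> (nat \<Rightarrow> nat) set" where
  "Aut Q = {f. bij f \<and> (\<forall>B. B \<in> Q \<longleftrightarrow> f ` B \<in> Q)}"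

definition invariant :: "(nat \<Rightarrow> nat) set \<Rightarrow> nat set set \<Rightarrow> bool" where
  "invariant G S \<longleftrightarrow> (\<forall>g\<in>G. (\<lambda>X. g ` X) ` S = S)"

end

theory Submission
  imports Defs "HOL-Library.Countable_Set"
begin

definition sw :: "nat \<Rightarrow> nat \<Rightarrow> nat \<Rightarrow> nat" where
  "sw a b c = (if c = a then b else if c = b then a else c)"

lemma bij_sw: "bij (sw a b)"
proof -
  have "sw a b \<circ> sw a b = id" by (auto simp: sw_def fun_eq_iff)
  then show ?thesis by (metis o_bij)
qed

lemma sat_cong: "(\<forall>v\<in>fv p. s v = t v) \<Longrightarrow> sat Q X s p = sat Q X t p"
proof (induction p arbitrary: s t)
  case (FEq u v)
  then show ?case by simp
next
  case (FPred v)
  then show ?case by simp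
next
  case (FNeg p)
  have "sat Q X s p = sat Q X t p" by (rule FNeg.IH) (use FNeg.prems in simp)
  then show ?case by (simp only: sat.simps)
next
  case (FConj f)
  have "\<And>i. sat Q X s (f i) = sat Q X t (f i)"
  proof -
    fix i
    show "sat Q X s (f i) = sat Q X t (f i)" by (rule FConj.IH[OF rangeI]) (use FConj.prems in auto)
  qed
  then show ?case by (simp only: sat.simps)
next
  case (FEx v p)
  have "\<And>a. sat Q X (s(v:=a)) p = sat Q X (t(v:=a)) p" by (rule FEx.IH) (use FEx.prems in auto)
  then show ?case by (simp only: sat.simps)
next
  case (FQ v p)
  have "\<And>a. sat Q X (s(v:=a)) p = sat Q X (t(v:=a)) p" by (rule FQ.IH) (use FQ.prems in auto)
  then show ?case by (simp only: sat.simps)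
qed

definition good :: "nat set set \<Rightarrow> nat set \<Rightarrow> bool" where
  "good Q X \<longleftrightarrow> X \<notin> Q \<and> - X \<notin> Q"

definition qprops :: "nat set set \<Rightarrow> bool" where
  "qprops Q \<longleftrightarrow> {} \<notin> Q \<and> UNIV \<notin> Q \<and> (\<forall>D D'. D \<in> Q \<and> finite ((D - D') \<union> (D' - D)) \<longrightarrow> D' \<in> Q)"

lemma swap_closed:
  fixes X P D :: "nat set"
  assumes inv: "\<And>\<pi>. bij \<pi> \<Longrightarrow> \<pi> ` X = X \<Longrightarrow> (\<forall>x\<in>P. \<pi> x = x) \<Longrightarrow> (\<forall>a. a \<in> D \<longleftrightarrow> \<pi> a \<in> D)"
    and "x \<in> D" "x \<notin> P" "z \<notin> P" "x \<in> X \<longleftrightarrow> z \<in> X"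
  shows "z \<in> D"
proof -
  have inv2: "\<And>a. sw x z (sw x z a) = a" by (simp add: sw_def)
  have s1: "sw x z x = z" and s2: "sw x z z = x" and s3: "\<And>a. a \<noteq> x \<Longrightarrow> a \<noteq> z \<Longrightarrow> sw x z a = a"
    by (simp_all add: sw_def)
  have sub: "sw x z a \<in> X" if aX: "a \<in> X" for a
  proof (cases "a = x")
    case True then show ?thesis using aX assms(5) s1 by metis
  next
    case False
    show ?thesis
    proof (cases "a = z")
      case True then show ?thesis using aX assms(5) s2 by metis
    next
      case False then show ?thesis using aX s3 \<open>a \<noteq> x\<close> by metis
    qed
  qed
  have im: "sw x z ` X = X"
  proof (rule equalityI)
    show "sw x z ` X \<subseteq> X" using sub by blast
    show "X \<subseteq> sw x z ` X"
    proof
      fix a assume "a \<in> X"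
      then show "a \<in> sw x z ` X" using inv2[of a] sub[of a] by (metis image_eqI)
    qed
  qed
  have fx: "\<forall>a\<in>P. sw x z a = a" unfolding sw_def using assms(3,4) by metis
  have "\<forall>a. a \<in> D \<longleftrightarrow> sw x z a \<in> D" by (rule inv[OF bij_sw im fx])
  then have "z \<in> D \<longleftrightarrow> sw x z z \<in> D" by blast
  moreover have "sw x z z = x" by (simp add: sw_def)
  ultimately show ?thesis using assms(2) by simp
qed

lemma noQ:
  fixes X P D :: "nat set"
  assumes g: "good Q X" and qp: "qprops Q" and fP: "finite P"
    and inv: "\<And>\<pi>. bij \<pi> \<Longrightarrow> \<pi> ` X = X \<Longrightarrow> (\<forall>x\<in>P. \<pi> x = x) \<Longrightarrow> (\<forall>a. a \<in> D \<longleftrightarrow> \<pi> a \<in> D)"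
  shows "D \<notin> Q"
proof
  assume DQ: "D \<in> Q"
  define D0 where "D0 = (if \<exists>x\<in>X - P. x \<in> D then X else {}) \<union> (if \<exists>y\<in>- X - P. y \<in> D then - X else {})"
  have sub: "D - P = D0 - P"
  proof (rule equalityI)
    show "D - P \<subseteq> D0 - P"
    proof
      fix z assume z: "z \<in> D - P"
      show "z \<in> D0 - P"
      proof (cases "z \<in> X")
        case True
        then have "\<exists>x\<in>X - P. x \<in> D" using z by blast
        then show ?thesis using z True unfolding D0_def by simp
      next
        case False
        then have "\<exists>x\<in>- X - P. x \<in> D" using z by blast
        then show ?thesis using z False unfolding D0_def by simp
      qed
    qed
    show "D0 - P \<subseteq> D - P"
    proof
      fix z assume z: "z \<in> D0 - P"
      have zP: "z \<notin> P" using z by blast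
      show "z \<in> D - P"
      proof (cases "z \<in> X")
        case True
        have "\<exists>x\<in>X - P. x \<in> D"
        proof (rule ccontr)
          assume "\<not> (\<exists>x\<in>X - P. x \<in> D)"
          then have "D0 \<subseteq> - X" unfolding D0_def by simp
          then show False using z True by blast
        qed
        then obtain x where x: "x \<in> X" "x \<notin> P" "x \<in> D" by blast
        have xz: "x \<in> X \<longleftrightarrow> z \<in> X" using x(1) True by blast
        have "z \<in> D" by (rule swap_closed[OF inv x(3) x(2) zP xz])
        then show ?thesis using zP by blast
      next
        case False
        have "\<exists>x\<in>- X - P. x \<in> D"
        proof (rule ccontr)
          assume "\<not> (\<exists>x\<in>- X - P. x \<in> D)"
          then have "D0 \<subseteq> X" unfolding D0_def by simp
          then show False using z False by blast
        qed
        then obtain x where x: "x \<notin> X" "x \<notin> P" "x \<in> D" by blast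
        have xz: "x \<in> X \<longleftrightarrow> z \<in> X" using x(1) False by blast
        have "z \<in> D" by (rule swap_closed[OF inv x(3) x(2) zP xz])
        then show ?thesis using zP by blast
      qed
    qed
  qed
  have "(D - D0) \<union> (D0 - D) \<subseteq> P" using sub by blast
  then have "finite ((D - D0) \<union> (D0 - D))" using fP finite_subset by blast
  moreover have "\<forall>D D'. D \<in> Q \<and> finite ((D - D') \<union> (D' - D)) \<longrightarrow> D' \<in> Q"
    using qp unfolding qprops_def by blast
  ultimately have D0Q: "D0 \<in> Q" using DQ by blast
  have n1: "{} \<notin> Q" "UNIV \<notin> Q" using qp unfolding qprops_def by blast+
  have n2: "X \<notin> Q" "- X \<notin> Q" using g unfolding good_def by blast+
  show False
  proof (cases "\<exists>x\<in>X - P. x \<in> D")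
    case True
    then show False
    proof (cases "\<exists>y\<in>- X - P. y \<in> D")
      case True
      then have "D0 = UNIV" using \<open>\<exists>x\<in>X - P. x \<in> D\<close> unfolding D0_def by simp
      then show False using D0Q n1 by simp
    next
      case False
      then have "D0 = X" using \<open>\<exists>x\<in>X - P. x \<in> D\<close> unfolding D0_def by simp
      then show False using D0Q n2 by simp
    qed
  next
    case False
    then show False
    proof (cases "\<exists>y\<in>- X - P. y \<in> D")
      case True
      then have "D0 = - X" using \<open>\<not> (\<exists>x\<in>X - P. x \<in> D)\<close> unfolding D0_def by simp
      then show False using D0Q n2 by simp
    next
      case False
      then have "D0 = {}" using \<open>\<not> (\<exists>x\<in>X - P. x \<in> D)\<close> unfolding D0_def by simp
      then show False using D0Q n1 by simp
    qed
  qed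
qed

lemma ex_bij: "bij \<pi> \<Longrightarrow> (\<exists>a. P (\<pi> a)) = (\<exists>b. P b)"
  by (metis bij_pointE)

lemma transfer:
  assumes "finite (fv p)" "bij \<pi>" "\<pi> ` X = X'" "good Q X" "good Q X'" "qprops Q"
  shows "sat Q X s p = sat Q X' (\<pi> \<circ> s) p"
  using assms
proof (induction p arbitrary: X X' \<pi> s)
  case (FEq u v)
  have "inj \<pi>" using FEq.prems(2) bij_def by blast
  then show ?case by (simp add: inj_eq)
next
  case (FPred v)
  have "\<pi> (s v) \<in> \<pi> ` X \<longleftrightarrow> s v \<in> X" using FPred.prems(2) by (simp add: bij_def inj_image_mem_iff)
  then show ?case using FPred.prems(3) by simp
next
  case (FNeg p)
  have "sat Q X s p = sat Q X' (\<pi> \<circ> s) p" by (rule FNeg.IH) (use FNeg.prems in simp_all)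
  then show ?case by (simp only: sat.simps not_False_eq_True)
next
  case (FConj f)
  have "\<And>i. finite (fv (f i))" using FConj.prems(1) by (rule finite_subset[rotated]) auto
  then have "\<And>i. sat Q X s (f i) = sat Q X' (\<pi> \<circ> s) (f i)"
    by (rule FConj.IH[OF rangeI _ FConj.prems(2-)])
  then show ?case by (simp only: sat.simps not_False_eq_True)
next
  case (FEx v p)
  have "fv p \<subseteq> insert v (fv (FEx v p))" by auto
  then have fp: "finite (fv p)" using FEx.prems(1) finite_subset by auto
  have eq: "\<And>a. \<pi> \<circ> s(v := a) = (\<pi> \<circ> s)(v := \<pi> a)" by auto
  have "\<And>a. sat Q X (s(v := a)) p = sat Q X' ((\<pi> \<circ> s)(v := \<pi> a)) p"
  proof -
    fix a
    have "sat Q X (s(v := a)) p = sat Q X' (\<pi> \<circ> s(v := a)) p" by (rule FEx.IH[OF fp FEx.prems(2-)])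
    then show "sat Q X (s(v := a)) p = sat Q X' ((\<pi> \<circ> s)(v := \<pi> a)) p" by (simp only: eq)
  qed
  then have "sat Q X s (FEx v p) = (\<exists>a. sat Q X' ((\<pi> \<circ> s)(v := \<pi> a)) p)"
    by simp
  also have "\<dots> = (\<exists>b. sat Q X' ((\<pi> \<circ> s)(v := b)) p)"
    using ex_bij[OF FEx.prems(2)] .
  finally show ?case by (simp only: sat.simps not_False_eq_True)
next
  case (FQ v p)
  have "fv p \<subseteq> insert v (fv (FQ v p))" by auto
  then have fp: "finite (fv p)" using FQ.prems(1) finite_subset by auto
  have gen: "{a. sat Q Y (t(v := a)) p} \<notin> Q" if gY: "good Q Y" for Y t
  proof (rule noQ[OF gY FQ.prems(6), of "t ` (fv p - {v})"])
    show "finite (t ` (fv p - {v}))" using fp by simp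
    fix \<sigma> :: "nat \<Rightarrow> nat" assume s: "bij \<sigma>" "\<sigma> ` Y = Y" "\<forall>x\<in>t ` (fv p - {v}). \<sigma> x = x"
    show "\<forall>a. a \<in> {a. sat Q Y (t(v := a)) p} \<longleftrightarrow> \<sigma> a \<in> {a. sat Q Y (t(v := a)) p}"
    proof
      fix a
      have "sat Q Y (t(v := a)) p = sat Q Y (\<sigma> \<circ> t(v := a)) p"
        by (rule FQ.IH[OF fp s(1) s(2) gY gY FQ.prems(6)])
      also have "\<dots> = sat Q Y (t(v := \<sigma> a)) p"
        by (rule sat_cong) (use s(3) in auto)
      finally show "a \<in> {a. sat Q Y (t(v := a)) p} \<longleftrightarrow> \<sigma> a \<in> {a. sat Q Y (t(v := a)) p}" by simp
    qed
  qed
  have n1: "\<not> sat Q X s (FQ v p)" using gen[OF FQ.prems(4), of s] by (simp only: sat.simps not_False_eq_True)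
  have n2: "\<not> sat Q X' (\<pi> \<circ> s) (FQ v p)" using gen[OF FQ.prems(5), of "\<pi> \<circ> s"] by (simp only: sat.simps not_False_eq_True)
  show ?case using n1 n2 by blast
qed

lemma perm_exists:
  fixes X Y :: "nat set"
  assumes "infinite X" "infinite (- X)" "infinite Y" "infinite (- Y)"
  shows "\<exists>\<pi>. bij \<pi> \<and> \<pi> ` X = Y"
proof -
  obtain e1 :: "nat \<Rightarrow> nat" where e1: "bij_betw e1 X UNIV" using countableE_infinite[OF countableI_type assms(1)] by blast
  obtain e2 :: "nat \<Rightarrow> nat" where e2: "bij_betw e2 Y UNIV" using countableE_infinite[OF countableI_type assms(3)] by blast
  obtain e3 :: "nat \<Rightarrow> nat" where e3: "bij_betw e3 (- X) UNIV" using countableE_infinite[OF countableI_type assms(2)] by blast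
  obtain e4 :: "nat \<Rightarrow> nat" where e4: "bij_betw e4 (- Y) UNIV" using countableE_infinite[OF countableI_type assms(4)] by blast
  define g where "g = inv_into Y e2 \<circ> e1"
  define h where "h = inv_into (- Y) e4 \<circ> e3"
  have g: "bij_betw g X Y" unfolding g_def using e1 bij_betw_inv_into[OF e2] bij_betw_trans by blast
  have h: "bij_betw h (- X) (- Y)" unfolding h_def using e3 bij_betw_inv_into[OF e4] bij_betw_trans by blast
  define \<pi> where "\<pi> x = (if x \<in> X then g x else h x)" for x
  have 1: "bij_betw \<pi> X Y" using g by (rule bij_betw_cong[THEN iffD1, rotated]) (simp add: \<pi>_def)
  have 2: "bij_betw \<pi> (- X) (- Y)" using h by (rule bij_betw_cong[THEN iffD1, rotated]) (simp add: \<pi>_def)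
  have "bij_betw \<pi> (X \<union> - X) (Y \<union> - Y)" using bij_betw_combine[OF 1 2] by blast
  then have "bij \<pi>" by simp
  moreover have "\<pi> ` X = Y" using 1 bij_betw_imp_surj_on by blast
  ultimately show ?thesis by blast
qed

theorem mainTheorem5:
  fixes A :: "nat set" and Q :: "nat set set"
  assumes "infinite A" and "infinite (- A)"
    and "Q = {X. finite ((X - A) \<union> (A - X))}"
  shows "invariant (Aut Q) {X. finite (A - X)} \<and> \<not> definable Q {X. finite (A - X)}"
proof
  let ?S = "{X. finite (A - X)}"
  have AQ: "A \<in> Q" using assms(3) by simp
  show "invariant (Aut Q) ?S"
    unfolding invariant_def
  proof
    fix g assume "g \<in> Aut Q"
    then have bg: "bij g" and gQ: "\<And>B. B \<in> Q \<longleftrightarrow> g ` B \<in> Q" unfolding Aut_def by blast+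
    have ig: "inj g" using bij_is_inj[OF bg] .
    have sg: "surj g" using bij_is_surj[OF bg] .
    have "g ` A \<in> Q" using gQ AQ by blast
    then have fgA: "finite ((g ` A - A) \<union> (A - g ` A))" using assms(3) by simp
    show "(\<lambda>X. g ` X) ` ?S = ?S"
    proof
      show "(\<lambda>X. g ` X) ` ?S \<subseteq> ?S"
      proof
        fix Y assume "Y \<in> (\<lambda>X. g ` X) ` ?S"
        then obtain X where Y: "Y = g ` X" and X: "finite (A - X)" by auto
        have "A - Y \<subseteq> (A - g ` A) \<union> g ` (A - X)" using Y by blast
        moreover have "finite ((A - g ` A) \<union> g ` (A - X))" using fgA X by auto
        ultimately show "Y \<in> ?S" using finite_subset by auto
      qed
      show "?S \<subseteq> (\<lambda>X. g ` X) ` ?S"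
      proof
        fix X assume X: "X \<in> ?S"
        define Z where "Z = inv g ` X"
        have gZ: "g ` Z = X" unfolding Z_def using sg by (simp add: image_comp surj_iff)
        have "g ` (A - Z) = g ` A - X" using ig gZ by (metis image_set_diff)
        also have "\<dots> \<subseteq> (g ` A - A) \<union> (A - X)" by blast
        finally have "finite (g ` (A - Z))" using fgA X finite_subset by auto
        then have "finite (A - Z)" using ig by (metis finite_imageD inj_on_subset subset_UNIV)
        then show "X \<in> (\<lambda>X. g ` X) ` ?S" using gZ by auto
      qed
    qed
  qed
  show "\<not> definable Q ?S"
  proof
    assume "definable Q ?S"
    then obtain p where sp: "sentence p" and dp: "\<And>X s. X \<in> ?S \<longleftrightarrow> sat Q X s p"
      unfolding definable_def by blast
    have qp: "qprops Q" unfolding qprops_def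
    proof (intro conjI allI impI)
      show "{} \<notin> Q" using assms(1,3) by simp
      show "UNIV \<notin> Q" using assms(2,3) by (simp add: Compl_eq_Diff_UNIV)
      fix D D' assume "D \<in> Q \<and> finite ((D - D') \<union> (D' - D))"
      then have "finite (((D - A) \<union> (A - D)) \<union> ((D - D') \<union> (D' - D)))" using assms(3) by simp
      moreover have "(D' - A) \<union> (A - D') \<subseteq> ((D - A) \<union> (A - D)) \<union> ((D - D') \<union> (D' - D))" by blast
      ultimately show "D' \<in> Q" using assms(3) finite_subset by auto
    qed
    obtain e :: "nat \<Rightarrow> nat" where e: "bij_betw e (- A) UNIV" using countableE_infinite[OF countableI_type assms(2)] by blast
    define f where "f = inv_into (- A) e"
    have bf: "bij_betw f UNIV (- A)" unfolding f_def using bij_betw_inv_into[OF e] .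
    have injf: "inj f" using bij_betw_imp_inj_on[OF bf] .
    have infE: "infinite {n::nat. even n}" unfolding infinite_nat_iff_unbounded
    proof
      fix m :: nat
      show "\<exists>n>m. n \<in> {n. even n}" by (rule exI[of _ "2*m+2"]) simp
    qed
    have infO: "infinite {n::nat. odd n}" unfolding infinite_nat_iff_unbounded
    proof
      fix m :: nat
      show "\<exists>n>m. n \<in> {n. odd n}" by (rule exI[of _ "2*m+1"]) simp
    qed
    define E where "E = f ` {n. even n}"
    define F where "F = f ` {n. odd n}"
    have fU: "f ` UNIV = - A" using bij_betw_imp_surj_on[OF bf] .
    have EA: "E \<subseteq> - A" unfolding E_def using fU by blast
    have FE: "- A - E = F"
    proof -
      have "- A - E = f ` (UNIV - {n. even n})" unfolding E_def using fU injf by (metis image_set_diff)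
      also have "UNIV - {n::nat. even n} = {n. odd n}" by auto
      finally show ?thesis unfolding F_def .
    qed
    have iE: "infinite E" unfolding E_def using infE injf by (metis finite_imageD inj_on_subset subset_UNIV)
    have iF: "infinite F" unfolding F_def using infO injf by (metis finite_imageD inj_on_subset subset_UNIV)
    define X0 where "X0 = A \<union> E"
    define Y0 where "Y0 = E"
    have cX0: "- X0 = F" unfolding X0_def using FE by blast
    have gX: "good Q X0" unfolding good_def
    proof
      have "X0 - A = E" unfolding X0_def using EA by blast
      then show "X0 \<notin> Q" using assms(3) iE by auto
      have "A - - X0 = A" unfolding X0_def by blast
      then show "- X0 \<notin> Q" using assms(1,3) by auto
    qed
    have gY: "good Q Y0" unfolding good_def
    proof
      have "A - Y0 = A" unfolding Y0_def using EA by blast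
      then show "Y0 \<notin> Q" using assms(1,3) by auto
      have "- Y0 - A = F" unfolding Y0_def using FE by blast
      then show "- Y0 \<notin> Q" using assms(3) iF by auto
    qed
    have "\<exists>\<pi>. bij \<pi> \<and> \<pi> ` X0 = Y0"
    proof (rule perm_exists)
      show "infinite X0" unfolding X0_def using assms(1) by simp
      show "infinite (- X0)" using cX0 iF by simp
      show "infinite Y0" unfolding Y0_def using iE .
      show "infinite (- Y0)" unfolding Y0_def using EA assms(1) by (metis Compl_anti_mono compl_le_swap1 infinite_super)
    qed
    then obtain \<pi> where pi: "bij \<pi>" "\<pi> ` X0 = Y0" by blast
    have fv: "finite (fv p)" using sp unfolding sentence_def by simp
    have "sat Q X0 id p = sat Q Y0 (\<pi> \<circ> id) p" by (rule transfer[OF fv pi gX gY qp])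
    moreover have "X0 \<in> ?S"
    proof -
      have "A - X0 = {}" unfolding X0_def by blast
      then show ?thesis by (metis mem_Collect_eq finite.emptyI)
    qed
    moreover have "Y0 \<notin> ?S" unfolding Y0_def using EA assms(1)
      by (metis Diff_triv disjoint_eq_subset_Compl inf_commute mem_Collect_eq)
    ultimately show False using dp by blast
  qed
qed

end
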